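(* Let $2\le w<n$. If a Steiner system $S(2,w,n)$ exists, then $q'_0(2,w,n)=\frac{n-1}{w-1}+1$.
   Context: $\mathbb{Z}_q=\{0,\dots,q-1\}$ (an alphabet); $\mathrm{wt}$ = number of nonzero coordinates; $d$ = Hamming distance; $J_q(n,w)$ = weight-$w$ words of $\mathbb{Z}_q^n$. An $(n,w,d)_q$ code of size $M$ is a subset $C\subseteq J_q(n,w)$ with $|C|=M$ and pairwise distances at least $d$. A Steiner system $S(t,k,n)$ is a pair $(N,B)$, $|N|=n$, $B$ a set of $k$-subsets (blocks) of $N$ with every $t$-subset of $N$ in exactly one block. For $t,k,n$ such that an $S(t,k,n)$ exists, $q'_0(t,k,n)$ is the smallest $q$ for which an $(n,k,2k-t+1)_q$ code of size $\binom{n}{t}/\binom{k}{t}$ exists. *)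

theory Defs
  imports Complex_Main
begin

definition words :: "nat \<Rightarrow> nat \<Rightarrow> nat list set" where
  "words q n = {x. length x = n \<and> (\<forall>i<n. x ! i < q)}"

definition wt :: "nat list \<Rightarrow> nat" where
  "wt x = card {i. i < length x \<and> x ! i \<noteq> 0}"

definition hdist :: "nat list \<Rightarrow> nat list \<Rightarrow> nat" where
  "hdist x y = card {i. i < length x \<and> x ! i \<noteq> y ! i}"

definition J :: "nat \<Rightarrow> nat \<Rightarrow> nat \<Rightarrow> nat list set" where
  "J q n w = {x \<in> words q n. wt x = w}"

definition is_code :: "nat \<Rightarrow> nat \<Rightarrow> nat \<Rightarrow> nat \<Rightarrow> nat list set \<Rightarrow> bool" where
  "is_code q n w d C \<longleftrightarrow> C \<subseteq> J q n w \<and>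
     (\<forall>x\<in>C. \<forall>y\<in>C. x \<noteq> y \<longrightarrow> hdist x y \<ge> d)"

definition steiner_system :: "nat \<Rightarrow> nat \<Rightarrow> 'a set \<Rightarrow> 'a set set \<Rightarrow> bool" where
  "steiner_system t k N B \<longleftrightarrow> (\<forall>b\<in>B. b \<subseteq> N \<and> card b = k) \<and>
     (\<forall>T. T \<subseteq> N \<and> card T = t \<longrightarrow> (\<exists>!b. b \<in> B \<and> T \<subseteq> b))"

definition steiner_exists :: "nat \<Rightarrow> nat \<Rightarrow> nat \<Rightarrow> bool" where
  "steiner_exists t k n \<longleftrightarrow> (\<exists>(N::nat set) B. finite N \<and> card N = n \<and> steiner_system t k N B)"

definition q0' :: "nat \<Rightarrow> nat \<Rightarrow> nat \<Rightarrow> nat" where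
  "q0' t k n = (LEAST q. \<exists>C. is_code q n k (2 * k - t + 1) C \<and> finite C \<and>
       real (card C) = real (n choose t) / real (k choose t))"

end

theory Submission
  imports Defs
begin

lemma two_choose2: "2 * (k choose 2) = k * (k - 1)"
proof (induction k)
  case 0 then show ?case by simp
next
  case (Suc k)
  have "Suc k choose 2 = k + (k choose 2)"
    by (simp add: numeral_2_eq_2)
  then show ?case using Suc by (cases k) (simp_all add: algebra_simps)
qed

lemma steiner_pair:
  assumes "steiner_system 2 w N B" "x \<in> N" "y \<in> N" "x \<noteq> y"
  shows "\<exists>!b. b \<in> B \<and> {x, y} \<subseteq> b"
proof -
  have "{x, y} \<subseteq> N" "card {x, y} = 2" using assms by auto
  moreover have "\<forall>T. T \<subseteq> N \<and> card T = 2 \<longrightarrow> (\<exists>!b. b \<in> B \<and> T \<subseteq> b)"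
    using assms(1) unfolding steiner_system_def by simp
  ultimately show ?thesis by (metis (no_types, lifting))
qed

lemma steiner_inter:
  assumes S: "steiner_system 2 w N B" and b: "b \<in> B" "b' \<in> B" "b \<noteq> b'" and w: "w \<ge> 2"
  shows "card (b \<inter> b') \<le> 1"
proof (rule ccontr)
  assume "\<not> card (b \<inter> b') \<le> 1"
  have fin: "finite b" using S b w unfolding steiner_system_def
    by (metis card.infinite not_numeral_le_zero)
  have "finite (b \<inter> b')" using fin by simp
  with \<open>\<not> card (b \<inter> b') \<le> 1\<close> obtain x y where xy: "x \<in> b \<inter> b'" "y \<in> b \<inter> b'" "x \<noteq> y"
    using card_le_Suc0_iff_eq[of "b \<inter> b'"] by auto
  have "b \<subseteq> N" using S b unfolding steiner_system_def by auto
  then have "x \<in> N" "y \<in> N" using xy by auto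
  from steiner_pair[OF S this xy(3)] have "\<exists>!c. c \<in> B \<and> {x, y} \<subseteq> c" .
  then show False using xy b by auto
qed

lemma steiner_deg:
  assumes S: "steiner_system 2 w N B" and fN: "finite N" and w: "w \<ge> 2" and p: "p \<in> N"
  shows "card {b\<in>B. p \<in> b} * (w - 1) = card N - 1"
proof -
  let ?Bp = "{b\<in>B. p \<in> b}"
  have sub: "\<And>b. b \<in> B \<Longrightarrow> b \<subseteq> N" and cb: "\<And>b. b \<in> B \<Longrightarrow> card b = w"
    using S unfolding steiner_system_def by auto
  have finB: "finite B"
    using sub fN by (meson Pow_iff finite_Pow_iff finite_subset subsetI)
  have finBp: "finite ?Bp" using finB by simp
  have eq: "N - {p} = (\<Union>b\<in>?Bp. b - {p})"
  proof
    show "N - {p} \<subseteq> (\<Union>b\<in>?Bp. b - {p})"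
    proof
      fix y assume "y \<in> N - {p}"
      then have "y \<in> N" "p \<noteq> y" by auto
      from steiner_pair[OF S p this(1) this(2)] obtain c where "c \<in> B" "{p, y} \<subseteq> c" by auto
      then show "y \<in> (\<Union>b\<in>?Bp. b - {p})" using \<open>p \<noteq> y\<close> by auto
    qed
    show "(\<Union>b\<in>?Bp. b - {p}) \<subseteq> N - {p}" using sub by auto
  qed
  have fb: "\<And>b. b \<in> B \<Longrightarrow> finite b"
    using cb w by (metis card.infinite not_numeral_le_zero)
  have disj: "\<forall>b\<in>?Bp. \<forall>c\<in>?Bp. b \<noteq> c \<longrightarrow> (b - {p}) \<inter> (c - {p}) = {}"
  proof (intro ballI impI)
    fix b c assume bc: "b \<in> ?Bp" "c \<in> ?Bp" "b \<noteq> c"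
    have "card (b \<inter> c) \<le> 1" using steiner_inter[OF S _ _ bc(3) w] bc by auto
    moreover have "finite (b \<inter> c)" using fb bc by auto
    ultimately have "\<forall>x\<in>b \<inter> c. \<forall>y\<in>b \<inter> c. x = y" using card_le_Suc0_iff_eq by auto
    then show "(b - {p}) \<inter> (c - {p}) = {}" using bc by auto
  qed
  have "card (N - {p}) = (\<Sum>b\<in>?Bp. card (b - {p}))"
    unfolding eq by (rule card_UN_disjoint) (use finBp fb disj in auto)
  also have "\<dots> = (\<Sum>b\<in>?Bp. w - 1)"
    by (rule sum.cong) (auto simp: cb fb)
  also have "\<dots> = card ?Bp * (w - 1)" by simp
  finally show ?thesis using p fN by simp
qed

lemma steiner_count:
  assumes S: "steiner_system 2 w N B" and fN: "finite N" and w: "w \<ge> 2"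
    and r: "\<And>p. p \<in> N \<Longrightarrow> card {b\<in>B. p \<in> b} = r"
  shows "card B * w = card N * r"
proof -
  have sub: "\<And>b. b \<in> B \<Longrightarrow> b \<subseteq> N" and cb: "\<And>b. b \<in> B \<Longrightarrow> card b = w"
    using S unfolding steiner_system_def by auto
  have finB: "finite B"
    using sub fN by (meson Pow_iff finite_Pow_iff finite_subset subsetI)
  have "card B * w = (\<Sum>b\<in>B. card b)" using cb by simp
  also have "\<dots> = (\<Sum>b\<in>B. \<Sum>p\<in>N. if p \<in> b then 1 else 0::nat)"
    by (rule sum.cong) (auto simp: sum.If_cases Int_absorb1 sub fN)
  also have "\<dots> = (\<Sum>p\<in>N. \<Sum>b\<in>B. if p \<in> b then 1 else 0::nat)"
    by (rule sum.swap)
  also have "\<dots> = (\<Sum>p\<in>N. card {b\<in>B. p \<in> b})"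
    by (rule sum.cong) (auto simp: sum.If_cases finB Int_def)
  also have "\<dots> = card N * r" using r by simp
  finally show ?thesis .
qed

lemma code_bound:
  assumes C: "is_code q n w (2 * w - 2 + 1) C" and fC: "finite C" and w: "w \<ge> 1"
  shows "card C * w \<le> n * (q - 1)"
proof -
  have CJ: "\<And>x. x \<in> C \<Longrightarrow> length x = n \<and> (\<forall>i<n. x ! i < q) \<and> wt x = w"
    using C unfolding is_code_def J_def words_def by auto
  have dist: "\<And>x y. x \<in> C \<Longrightarrow> y \<in> C \<Longrightarrow> x \<noteq> y \<Longrightarrow> hdist x y \<ge> 2 * w - 1"
  proof -
    fix x y assume "x \<in> C" "y \<in> C" "x \<noteq> y"
    then have "hdist x y \<ge> 2 * w - 2 + 1" using C unfolding is_code_def by auto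
    then show "hdist x y \<ge> 2 * w - 1" using w by linarith
  qed
  define S where "S x = {j. j < n \<and> x ! j \<noteq> 0}" for x :: "nat list"
  have cS: "\<And>x. x \<in> C \<Longrightarrow> card (S x) = w"
    using CJ unfolding wt_def S_def by auto
  have finS: "\<And>x. finite (S x)" unfolding S_def by auto
  have key: "card {x\<in>C. x ! i \<noteq> 0} \<le> q - 1" if i: "i < n" for i
  proof -
    have inj: "inj_on (\<lambda>x. x ! i) {x\<in>C. x ! i \<noteq> 0}"
    proof (rule inj_onI, rule ccontr)
      fix x y assume xy: "x \<in> {x\<in>C. x ! i \<noteq> 0}" "y \<in> {x\<in>C. x ! i \<noteq> 0}" "x ! i = y ! i" "x \<noteq> y"
      have lx: "length x = n" using CJ xy by auto
      have "{j. j < length x \<and> x ! j \<noteq> y ! j} \<subseteq> (S x \<union> S y) - {i}"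
        using xy lx unfolding S_def by auto
      then have "hdist x y \<le> card ((S x \<union> S y) - {i})"
        unfolding hdist_def by (rule card_mono[rotated]) (simp add: finS)
      also have "\<dots> = card (S x \<union> S y) - 1"
        using xy i unfolding S_def by (simp add: finS)
      also have "card (S x \<union> S y) + card (S x \<inter> S y) = 2 * w"
        using card_Un_Int[OF finS finS, of x y] cS xy by auto
      moreover have "card (S x \<inter> S y) \<ge> 1"
      proof -
        have "i \<in> S x \<inter> S y" using xy i unfolding S_def by auto
        then show ?thesis using finS
          by (metis One_nat_def Suc_leI card_gt_0_iff empty_iff finite_Int)
      qed
      ultimately have "hdist x y \<le> 2 * w - 2" by linarith
      moreover have "hdist x y \<ge> 2 * w - 1" using dist xy by auto
      ultimately show False using w by linarith
    qed
    have "(\<lambda>x. x ! i) ` {x\<in>C. x ! i \<noteq> 0} \<subseteq> {1..<q}"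
      using CJ i by auto
    from card_inj_on_le[OF inj this] show ?thesis by simp
  qed
  have "card C * w = (\<Sum>x\<in>C. card (S x))" using cS by simp
  also have "\<dots> = (\<Sum>x\<in>C. \<Sum>i<n. if x ! i \<noteq> 0 then 1 else 0::nat)"
    by (rule sum.cong) (auto simp: sum.If_cases S_def Int_def)
  also have "\<dots> = (\<Sum>i<n. \<Sum>x\<in>C. if x ! i \<noteq> 0 then 1 else 0::nat)"
    by (rule sum.swap)
  also have "\<dots> = (\<Sum>i<n. card {x\<in>C. x ! i \<noteq> 0})"
    by (rule sum.cong) (auto simp: sum.If_cases fC Int_def)
  also have "\<dots> \<le> (\<Sum>i<n. q - 1)"
    by (rule sum_mono) (use key in auto)
  also have "\<dots> = n * (q - 1)" by simp
  finally show ?thesis .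
qed

lemma construction:
  assumes fN: "finite N" and cN: "card N = n" and S: "steiner_system 2 w N B"
    and w: "2 \<le> w" and wn: "w < n"
  shows "\<exists>r. r * (w - 1) = n - 1 \<and> (\<exists>C. is_code (r + 1) n w (2 * w - 2 + 1) C \<and> finite C \<and>
            card C * (w choose 2) = n choose 2)"
proof -
  have sub: "\<And>b. b \<in> B \<Longrightarrow> b \<subseteq> N" and cb: "\<And>b. b \<in> B \<Longrightarrow> card b = w"
    using S unfolding steiner_system_def by auto
  have finB: "finite B"
    using sub fN by (meson Pow_iff finite_Pow_iff finite_subset subsetI)
  have "N \<noteq> {}" using cN wn by auto
  then obtain p0 where p0: "p0 \<in> N" by auto
  define Bp where "Bp p = {b\<in>B. p \<in> b}" for p
  define r where "r = card (Bp p0)"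
  have deg: "\<And>p. p \<in> N \<Longrightarrow> card (Bp p) * (w - 1) = n - 1"
    using steiner_deg[OF S fN w] cN unfolding Bp_def by auto
  have rr: "\<And>p. p \<in> N \<Longrightarrow> card (Bp p) = r"
  proof -
    fix p assume "p \<in> N"
    then have "card (Bp p) * (w - 1) = card (Bp p0) * (w - 1)" using deg p0 by simp
    then show "card (Bp p) = r" using w unfolding r_def by simp
  qed
  have r1: "r * (w - 1) = n - 1" using deg[OF p0] unfolding r_def .
  have cntB: "card B * w = n * r"
    using steiner_count[OF S fN w, of r] rr cN unfolding Bp_def by auto
  have "\<forall>p\<in>N. \<exists>h. bij_betw h (Bp p) {1..r}"
  proof
    fix p assume "p \<in> N"
    have "finite (Bp p)" using finB unfolding Bp_def by simp
    then show "\<exists>h. bij_betw h (Bp p) {1..r}"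
      using rr[OF \<open>p \<in> N\<close>] by (intro finite_same_card_bij) auto
  qed
  then obtain H where H: "\<And>p. p \<in> N \<Longrightarrow> bij_betw (H p) (Bp p) {1..r}" by metis
  have "card {0..<n} = card N" using cN by simp
  then obtain f where f: "bij_betw f {0..<n} N"
    using finite_same_card_bij[of "{0..<n}" N] fN by auto
  define cw where "cw b = map (\<lambda>i. if f i \<in> b then H (f i) b else 0) [0..<n]" for b
  define P where "P b = {i \<in> {0..<n}. f i \<in> b}" for b
  have Hin: "\<And>i b. i < n \<Longrightarrow> b \<in> B \<Longrightarrow> f i \<in> b \<Longrightarrow> H (f i) b \<in> {1..r}"
  proof -
    fix i b assume "i < n" "b \<in> B" "f i \<in> b"
    then have "f i \<in> N" "b \<in> Bp (f i)" using f unfolding Bp_def bij_betw_def by auto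
    then show "H (f i) b \<in> {1..r}" using H bij_betwE by blast
  qed
  have cwi: "\<And>b i. i < n \<Longrightarrow> cw b ! i = (if f i \<in> b then H (f i) b else 0)"
    unfolding cw_def by simp
  have nz: "\<And>b i. b \<in> B \<Longrightarrow> i < n \<Longrightarrow> (cw b ! i \<noteq> 0) = (f i \<in> b)"
  proof -
    fix b i assume bi: "b \<in> B" "i < n"
    show "(cw b ! i \<noteq> 0) = (f i \<in> b)"
    proof (cases "f i \<in> b")
      case True
      then have "H (f i) b \<in> {1..r}" using Hin bi by blast
      then show ?thesis using True cwi[OF bi(2)] by auto
    qed (use cwi[OF bi(2)] in auto)
  qed
  have len: "\<And>b. length (cw b) = n" unfolding cw_def by simp
  have Pbij: "\<And>b. b \<in> B \<Longrightarrow> bij_betw f (P b) b"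
  proof -
    fix b assume b: "b \<in> B"
    have "f ` P b = b" using f sub[OF b] unfolding P_def bij_betw_def by auto
    show "bij_betw f (P b) b"
    proof (rule bij_betw_subset[OF f _ \<open>f ` P b = b\<close>])
      show "P b \<subseteq> {0..<n}" unfolding P_def by blast
    qed
  qed
  have cP: "\<And>b. b \<in> B \<Longrightarrow> card (P b) = w"
    using Pbij cb bij_betw_same_card by metis
  have finP: "\<And>b. finite (P b)" unfolding P_def by auto
  have supp: "\<And>b. b \<in> B \<Longrightarrow> {i. i < length (cw b) \<and> cw b ! i \<noteq> 0} = P b"
    using nz len unfolding P_def by auto
  have wt: "\<And>b. b \<in> B \<Longrightarrow> wt (cw b) = w" unfolding wt_def using supp cP by simp
  have PI: "\<And>b c. P b \<inter> P c = P (b \<inter> c)" unfolding P_def by auto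
  have inj: "inj_on cw B"
  proof (rule inj_onI)
    fix b c assume bc: "b \<in> B" "c \<in> B" "cw b = cw c"
    then have "P b = P c" using supp by metis
    then show "b = c" using Pbij[OF bc(1)] Pbij[OF bc(2)] bij_betw_imp_surj_on by metis
  qed
  define C where "C = cw ` B"
  have code: "is_code (r + 1) n w (2 * w - 2 + 1) C"
    unfolding is_code_def
  proof
    show "C \<subseteq> J (r + 1) n w"
    proof
      fix x assume "x \<in> C"
      then obtain b where b: "b \<in> B" "x = cw b" unfolding C_def by auto
      have "\<forall>i<n. cw b ! i < r + 1"
      proof (intro allI impI)
        fix i assume "i < n"
        then show "cw b ! i < r + 1" using cwi Hin b by fastforce
      qed
      then show "x \<in> J (r + 1) n w" using b wt len unfolding J_def words_def by auto
    qed
    show "\<forall>x\<in>C. \<forall>y\<in>C. x \<noteq> y \<longrightarrow> 2 * w - 2 + 1 \<le> hdist x y"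
    proof (intro ballI impI)
      fix x y assume xy: "x \<in> C" "y \<in> C" "x \<noteq> y"
      then obtain b c where bc: "b \<in> B" "c \<in> B" "x = cw b" "y = cw c" unfolding C_def by auto
      then have bnc: "b \<noteq> c" using xy by auto
      have D: "{i. i < length x \<and> x ! i \<noteq> y ! i} = P b \<union> P c"
      proof (intro set_eqI iffI)
        fix i assume "i \<in> {i. i < length x \<and> x ! i \<noteq> y ! i}"
        then show "i \<in> P b \<union> P c" using bc cwi len unfolding P_def by (auto split: if_splits)
      next
        fix i assume i: "i \<in> P b \<union> P c"
        then have il: "i < n" unfolding P_def by auto
        have "x ! i \<noteq> y ! i"
        proof (cases "f i \<in> b \<and> f i \<in> c")
          case True
          then have "f i \<in> N" using sub bc by auto
          have "b \<in> Bp (f i)" "c \<in> Bp (f i)" using True bc unfolding Bp_def by auto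
          then have "H (f i) b \<noteq> H (f i) c"
            using H[OF \<open>f i \<in> N\<close>] bnc unfolding bij_betw_def inj_on_def by metis
          then show ?thesis using True bc cwi il by simp
        next
          case False
          have "(cw b ! i \<noteq> 0) \<noteq> (cw c ! i \<noteq> 0)"
            using False i il nz[OF bc(1) il] nz[OF bc(2) il] unfolding P_def by blast
          then show ?thesis using bc by metis
        qed
        then show "i \<in> {i. i < length x \<and> x ! i \<noteq> y ! i}" using il bc len by auto
      qed
      have "card (P b \<inter> P c) \<le> 1"
      proof -
        have "card (P (b \<inter> c)) = card (b \<inter> c)"
        proof -
          have "bij_betw f (P (b \<inter> c)) (b \<inter> c)"
          proof -
            have "f ` P (b \<inter> c) = b \<inter> c" using f sub[OF bc(1)] unfolding P_def bij_betw_def by auto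
            show ?thesis
            proof (rule bij_betw_subset[OF f _ \<open>f ` P (b \<inter> c) = b \<inter> c\<close>])
              show "P (b \<inter> c) \<subseteq> {0..<n}" unfolding P_def by blast
            qed
          qed
          then show ?thesis by (rule bij_betw_same_card)
        qed
        then show ?thesis using steiner_inter[OF S bc(1,2) bnc w] PI by simp
      qed
      moreover have "card (P b \<union> P c) + card (P b \<inter> P c) = 2 * w"
        using card_Un_Int[OF finP finP, of b c] cP bc by simp
      ultimately have "card (P b \<union> P c) \<ge> 2 * w - 1" by linarith
      then show "2 * w - 2 + 1 \<le> hdist x y" unfolding hdist_def D using w by linarith
    qed
  qed
  have cC: "card C = card B" unfolding C_def using card_image[OF inj] .
  have "2 * (card C * (w choose 2)) = 2 * (n choose 2)"
  proof -
    have "2 * (card C * (w choose 2)) = card B * w * (w - 1)"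
      using two_choose2[of w] cC by (simp add: algebra_simps)
    also have "\<dots> = n * (r * (w - 1))" using cntB by (simp add: algebra_simps)
    also have "\<dots> = 2 * (n choose 2)" using r1 two_choose2[of n] by simp
    finally show ?thesis .
  qed
  then have "card C * (w choose 2) = n choose 2" by simp
  moreover have "finite C" unfolding C_def using finB by simp
  ultimately show ?thesis using r1 code by blast
qed

theorem mainTheorem8:
  fixes w n :: nat
  assumes "2 \<le> w" and "w < n" and "steiner_exists 2 w n"
  shows "real (q0' 2 w n) = (real n - 1) / (real w - 1) + 1"
proof -
  obtain N :: "nat set" and B where NB: "finite N" "card N = n" "steiner_system 2 w N B"
    using assms(3) unfolding steiner_exists_def by auto
  obtain r C where r: "r * (w - 1) = n - 1" and C: "is_code (r + 1) n w (2 * w - 2 + 1) C"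
    "finite C" "card C * (w choose 2) = n choose 2"
    using construction[OF NB assms(1,2)] by blast
  have wc: "(w choose 2) > 0" using assms(1) by simp
  have eq2: "2 * w - 2 + 1 = 2 * w - 2 + 1" ..
  have "q0' 2 w n = r + 1"
    unfolding q0'_def
  proof (rule Least_equality)
    have "real (card C) = real (n choose 2) / real (w choose 2)"
      using C(3) wc by (simp add: field_simps flip: of_nat_mult)
    then show "\<exists>C. is_code (r + 1) n w (2 * w - 2 + 1) C \<and> finite C \<and>
       real (card C) = real (n choose 2) / real (w choose 2)" using C by blast
  next
    fix q assume "\<exists>C. is_code q n w (2 * w - 2 + 1) C \<and> finite C \<and>
       real (card C) = real (n choose 2) / real (w choose 2)"
    then obtain D where D: "is_code q n w (2 * w - 2 + 1) D" "finite D"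
      "real (card D) = real (n choose 2) / real (w choose 2)" by blast
    have "real (card D * (w choose 2)) = real (n choose 2)"
      using D(3) wc by (simp add: field_simps)
    then have Dc: "card D * (w choose 2) = n choose 2" by (simp only: of_nat_eq_iff)
    have bd: "card D * w \<le> n * (q - 1)" using code_bound[OF D(1,2)] assms(1) by simp
    have "n * (n - 1) = card D * w * (w - 1)"
      using Dc two_choose2[of n] two_choose2[of w] by (metis mult.assoc mult.left_commute)
    also have "\<dots> \<le> n * (q - 1) * (w - 1)" using bd by simp
    finally have "n * (n - 1) \<le> n * ((q - 1) * (w - 1))" by (simp add: mult.assoc)
    then have "n - 1 \<le> (q - 1) * (w - 1)" using assms(2) by simp
    then have "r * (w - 1) \<le> (q - 1) * (w - 1)" using r by simp
    then have "r \<le> q - 1" using assms(1) by simp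
    moreover have "r \<ge> 1" using r assms by (metis Suc_le_eq diff_less_mono less_one mult_is_0 not_less_zero zero_less_diff one_le_numeral le_trans neq0_conv not_le)
    ultimately show "r + 1 \<le> q" by linarith
  qed
  moreover have "real n - 1 = real r * (real w - 1)"
    using r assms by (metis of_nat_1 of_nat_diff of_nat_mult less_imp_le_nat le_trans one_le_numeral order.strict_trans2 Suc_leI zero_less_iff_neq_zero)
  ultimately show ?thesis using assms(1) by simp
qed

end
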